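(* For complex parameters $x_0,x_1,y_0,y_1,y_2\in\mathbb{C}$, consider the polynomial \[ p(x,y)(s) = (s^4+2s^2)(x_0+x_1 s+s^2)+y_0+y_1 s+y_2 s^2 \] in the complex indeterminate $s$, and let \[ x_0^*=7,\quad x_1^* = \tfrac{6\sqrt{15}}{5},\quad y_0^* = \tfrac{27}{125},\quad y_1^* = \tfrac{54\sqrt{15}}{125},\quad y_2^*= -\tfrac{43}{5}. \] Then the abscissa $\alpha(p(x,y))$, viewed as a function of $(x_0,x_1,y_0,y_1,y_2)\in\mathbb{C}^5$, is locally minimized at $(x_0^*,x_1^*,y_0^*,y_1^*,y_2^* )$. Furthermore, there is a positive constant $\tau$ such that for all $(x_0,x_1,y_0,y_1,y_2)$ sufficiently close to $(x_0^*,x_1^*,y_0^*,y_1^*,y_2^* )$, \[ \alpha(p(x,y)) \geq \alpha(p(x^*,y^* )) + \tau \|d\|, \] where $d = [x_0 - x_0^*,\ x_1 - x_1^*,\ y_0 - y_0^*,\ y_1 - y_1^*,\ y_2 - y_2^*]\in\mathbb{C}^5$.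
   Context: For a polynomial $q$ with complex coefficients, its abscissa is $\alpha(q)=\max\{\Re z : q(z)=0\}$. Here $x(s)=x_0+x_1s+s^2$ and $y(s)=y_0+y_1s+y_2s^2$, and $p(x^*,y^* )$ denotes $p$ evaluated at the starred coefficients. $\|\cdot\|$ denotes the Euclidean norm on $\mathbb{C}^5$. *)

theory Defs
  imports "HOL-Analysis.Analysis" "HOL-Computational_Algebra.Polynomial"
begin

definition abscissa :: "complex poly \<Rightarrow> real" where
  "abscissa q = Max (Re ` {z. poly q z = 0})"

text \<open>p(x,y)(s) = (s^4 + 2 s^2)(x0 + x1 s + s^2) + y0 + y1 s + y2 s^2\<close>
definition pxy :: "complex \<Rightarrow> complex \<Rightarrow> complex \<Rightarrow> complex \<Rightarrow> complex \<Rightarrow> complex poly" where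
  "pxy x0 x1 y0 y1 y2 = [:0, 0, 2, 0, 1:] * [:x0, x1, 1:] + [:y0, y1, y2:]"

definition x0s :: complex where "x0s = 7"
definition x1s :: complex where "x1s = complex_of_real (6 * sqrt 15 / 5)"
definition y0s :: complex where "y0s = 27 / 125"
definition y1s :: complex where "y1s = complex_of_real (54 * sqrt 15 / 125)"
definition y2s :: complex where "y2s = - 43 / 5"

definition norm5 :: "complex \<Rightarrow> complex \<Rightarrow> complex \<Rightarrow> complex \<Rightarrow> complex \<Rightarrow> real" where
  "norm5 a b c d e = sqrt ((cmod a)^2 + (cmod b)^2 + (cmod c)^2 + (cmod d)^2 + (cmod e)^2)"

end

theory Submission
  imports Defs "HOL-Computational_Algebra.Fundamental_Theorem_Algebra"
begin


lemma pxy_eq: "pxy x0 x1 y0 y1 y2 = [:y0, y1, 2*x0+y2, 2*x1, x0+2, x1, 1:]"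
  unfolding pxy_def by (simp add: algebra_simps)

definition lp :: "complex list \<Rightarrow> complex poly" where
  "lp us = (\<Prod>u\<leftarrow>us. [:-u,1:])"

lemma lp_high: "length us < k \<Longrightarrow> coeff (lp us) k = 0"
proof (induction us arbitrary: k)
  case Nil then show ?case by (simp add: lp_def coeff_1 )
next
  case (Cons u us)
  then obtain k' where k: "k = Suc k'" by (cases k) auto
  have "coeff (lp (u#us)) k = -u * coeff (lp us) (Suc k') + coeff (lp us) k'"
    unfolding k lp_def by simp
  then show ?case using Cons by (simp add: k)
qed

lemma lp_top: "coeff (lp us) (length us) = 1"
proof (induction us)
  case Nil then show ?case by (simp add: lp_def)
next
  case (Cons u us)
  have "coeff (lp (u#us)) (length (u#us)) = -u * coeff (lp us) (Suc (length us)) + coeff (lp us) (length us)"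
    unfolding lp_def by simp
  then show ?case using Cons lp_high[of us "Suc (length us)"] by simp
qed

lemma lp_sub1: "length us = Suc n \<Longrightarrow> coeff (lp us) n = - sum_list us"
proof (induction us arbitrary: n)
  case Nil then show ?case by simp
next
  case (Cons u us)
  show ?case
  proof (cases n)
    case 0
    then have "us = []" using Cons by simp
    then show ?thesis using 0 by (simp add: lp_def)
  next
    case (Suc m)
    have "coeff (lp (u#us)) n = -u * coeff (lp us) (Suc m) + coeff (lp us) m"
      unfolding lp_def Suc by simp
    moreover have "coeff (lp us) (Suc m) = 1" using lp_top[of us] Cons Suc by simp
    moreover have "coeff (lp us) m = - sum_list us" using Cons Suc by simp
    ultimately show ?thesis by simp
  qed
qed

lemma lp_sub2: "length us = Suc (Suc n) \<Longrightarrow>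
   coeff (lp us) n = ((sum_list us)^2 - sum_list (map (\<lambda>u. u^2) us)) / 2"
proof (induction us arbitrary: n)
  case Nil then show ?case by simp
next
  case (Cons u us)
  show ?case
  proof (cases n)
    case 0
    then obtain v where "us = [v]" using Cons by (cases us) auto
    then show ?thesis using 0 by (simp add: lp_def power2_eq_square field_simps)
  next
    case (Suc m)
    have "coeff (lp (u#us)) n = -u * coeff (lp us) (Suc m) + coeff (lp us) m"
      unfolding lp_def Suc by simp
    moreover have "coeff (lp us) (Suc m) = - sum_list us" using lp_sub1[of us "Suc m"] Cons Suc by simp
    moreover have "coeff (lp us) m = ((sum_list us)^2 - sum_list (map (\<lambda>u. u^2) us)) / 2" using Cons Suc by simp
    ultimately show ?thesis by (simp add: power2_eq_square field_simps)
  qed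
qed

lemma lp_bound:
  assumes "\<forall>u\<in>set us. cmod u \<le> M" "0 \<le> M" "M \<le> 1"
  shows "cmod (coeff (lp us) k) \<le> 2^length us * M^(length us - k)"
  using assms
proof (induction us arbitrary: k)
  case Nil then show ?case by (simp add: lp_def coeff_1)
next
  case (Cons u us)
  let ?n = "length us"
  have um: "cmod u \<le> M" using Cons by simp
  have IH: "\<And>k. cmod (coeff (lp us) k) \<le> 2^?n * M^(?n - k)" using Cons by simp
  show ?case
  proof (cases k)
    case 0
    have "coeff (lp (u#us)) k = -u * coeff (lp us) 0" unfolding lp_def 0 by simp
    then have "cmod (coeff (lp (u#us)) k) = cmod u * cmod (coeff (lp us) 0)" by (simp add: norm_mult)
    also have "\<dots> \<le> M * (2^?n * M^?n)" using IH[of 0] um Cons.prems by (intro mult_mono) auto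
    also have "\<dots> \<le> 2^length (u#us) * M^(length (u#us) - k)" using 0 \<open>0 \<le> M\<close> by simp
    finally show ?thesis .
  next
    case (Suc k')
    have "coeff (lp (u#us)) k = -u * coeff (lp us) (Suc k') + coeff (lp us) k'" unfolding lp_def Suc by simp
    then have "cmod (coeff (lp (u#us)) k) \<le> cmod u * cmod (coeff (lp us) (Suc k')) + cmod (coeff (lp us) k')"
      by (metis norm_minus_cancel norm_mult norm_triangle_ineq mult_minus_left)
    also have "\<dots> \<le> M * (2^?n * M^(?n - Suc k')) + 2^?n * M^(?n - k')"
      using IH[of "Suc k'"] IH[of k'] um Cons.prems by (intro add_mono mult_mono) auto
    also have "M * M^(?n - Suc k') \<le> M^(?n - k')"
    proof (cases "k' < ?n")
      case True then have "?n - k' = Suc (?n - Suc k')" by simp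
      then show ?thesis by simp
    next
      case False then show ?thesis using Cons.prems by simp
    qed
    then have "M * (2^?n * M^(?n - Suc k')) + 2^?n * M^(?n - k') \<le> 2^?n * M^(?n - k') + 2^?n * M^(?n - k')"
      by (simp add: mult.left_commute)
    also have "\<dots> = 2^length (u#us) * M^(length (u#us) - k)" using Suc by simp
    finally show ?thesis by simp
  qed
qed



definition qpoly :: "complex \<Rightarrow> complex \<Rightarrow> complex \<Rightarrow> complex \<Rightarrow> complex \<Rightarrow> complex \<Rightarrow> complex \<Rightarrow> complex poly" where
 "qpoly c0 c1 c2 c3 c4 c5 b = [: c0 + b*c1 + b^2*c2 + b^3*c3 + b^4*c4 + b^5*c5 + b^6,
     c1 + 2*b*c2 + 3*b^2*c3 + 4*b^3*c4 + 5*b^4*c5 + 6*b^5,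
     c2 + 3*b*c3 + 6*b^2*c4 + 10*b^3*c5 + 15*b^4,
     c3 + 4*b*c4 + 10*b^2*c5 + 20*b^3,
     c4 + 5*b*c5 + 15*b^2,
     c5 + 6*b, 1:]"

lemma qpoly_eval: "poly (qpoly c0 c1 c2 c3 c4 c5 b) t = poly [:c0,c1,c2,c3,c4,c5,1:] (t+b)"
  unfolding qpoly_def by (simp add: algebra_simps power2_eq_square power3_eq_cube power4_eq_xxxx power_numeral_reduce)



lemma per_term:
  fixes x a b :: real
  assumes "x \<le> a" "\<bar>x\<bar> \<le> 1/1000" "0 \<le> b" "b \<le> 1"
  shows "4*x + 2*b*x^2 \<le> 8*max a 0 - \<bar>x\<bar>"
proof -
  have "\<bar>x\<bar> * \<bar>x\<bar> \<le> \<bar>x\<bar> * (1/1000)" using assms(2) by (intro mult_left_mono) auto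
  then have h1: "x^2 \<le> \<bar>x\<bar> / 1000" by (simp add: power2_eq_square abs_mult_self)
  have "b*x^2 \<le> 1*x^2" using assms(4) by (intro mult_right_mono) auto
  then have "2*b*x^2 \<le> 2*\<bar>x\<bar>/1000" using h1 by linarith
  then show ?thesis using assms by (cases "x \<ge> 0") auto
qed

lemma tri6: fixes u0 u1 u2 u3 u4 u5 :: complex
  shows "cmod (u0+u1+u2+u3+u4+u5) \<le> cmod u0+cmod u1+cmod u2+cmod u3+cmod u4+cmod u5"
proof -
  have "cmod (u0+u1+u2+u3+u4+u5) \<le> cmod (u0+u1+u2+u3+u4) + cmod u5" by (rule norm_triangle_ineq)
  moreover have "cmod (u0+u1+u2+u3+u4) \<le> cmod (u0+u1+u2+u3) + cmod u4" by (rule norm_triangle_ineq)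
  moreover have "cmod (u0+u1+u2+u3) \<le> cmod (u0+u1+u2) + cmod u3" by (rule norm_triangle_ineq)
  moreover have "cmod (u0+u1+u2) \<le> cmod (u0+u1) + cmod u2" by (rule norm_triangle_ineq)
  moreover have "cmod (u0+u1) \<le> cmod u0 + cmod u1" by (rule norm_triangle_ineq)
  ultimately show ?thesis by linarith
qed

lemma sq_le_abs: "\<bar>x::real\<bar> \<le> 1 \<Longrightarrow> x^2 \<le> \<bar>x\<bar>"
proof -
  assume "\<bar>x\<bar> \<le> 1"
  then have "\<bar>x\<bar> * \<bar>x\<bar> \<le> \<bar>x\<bar> * 1" by (intro mult_left_mono) auto
  then show ?thesis by (simp add: power2_eq_square abs_mult_self)
qed

lemma sq_le_2b: "1/2 \<le> (b::real) \<Longrightarrow> y^2 \<le> 2*b*y^2"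
proof -
  assume "1/2 \<le> b"
  then have "1 * y^2 \<le> (2*b) * y^2" by (intro mult_right_mono) auto
  then show ?thesis by simp
qed

lemma cmod_le_sqrt: "cmod u ^2 \<le> N \<Longrightarrow> cmod u \<le> sqrt N"
  using real_le_rsqrt by blast

lemma re_sq: "Re (u^2) = Re u ^2 - Im u ^2"
  by (simp add: power2_eq_square)

lemma cmod_sq: "cmod u ^2 = Re u ^2 + Im u ^2"
  by (simp add: cmod_power2)

lemma mainineq:
  fixes u0 u1 u2 u3 u4 u5 Q3 :: complex and a b :: real
  defines "S \<equiv> u0+u1+u2+u3+u4+u5"
    and "P2 \<equiv> u0^2+u1^2+u2^2+u3^2+u4^2+u5^2"
    and "N2 \<equiv> cmod u0^2+cmod u1^2+cmod u2^2+cmod u3^2+cmod u4^2+cmod u5^2"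
  assumes q3: "cmod Q3 \<le> 64 * sqrt N2 ^ 3"
    and eq: "Q3 + 2 * of_real b * (S^2 - P2) - 4 * S = 0"
    and b: "1/2 \<le> b" "b \<le> 1"
    and small: "N2 \<le> 1/1000000"
    and re: "Re u0 \<le> a" "Re u1 \<le> a" "Re u2 \<le> a" "Re u3 \<le> a" "Re u4 \<le> a" "Re u5 \<le> a"
  shows "N2 \<le> 52 * max a 0 \<and> cmod S \<le> N2"
proof -
  define M where "M = sqrt N2"
  have N2ge: "0 \<le> N2" unfolding N2_def by (intro add_nonneg_nonneg) auto
  have MM: "M^2 = N2" unfolding M_def using N2ge by simp
  have M0: "0 \<le> M" unfolding M_def using N2ge by simp
  have Msmall: "M \<le> 1/1000"
  proof (rule power2_le_imp_le)
    have "(1/1000::real)^2 = 1/1000000" by (simp add: power2_eq_square)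
    then show "M^2 \<le> (1/1000)^2" using MM small by linarith
  qed simp
  have M3: "M^3 \<le> N2/1000"
  proof -
    have "M^3 = M * N2" using MM by (simp add: power3_eq_cube power2_eq_square)
    also have "\<dots> \<le> (1/1000) * N2" using Msmall N2ge by (rule mult_right_mono)
    also have "\<dots> = N2/1000" by simp
    finally show ?thesis .
  qed
  have ub: "cmod u0 \<le> M" "cmod u1 \<le> M" "cmod u2 \<le> M" "cmod u3 \<le> M" "cmod u4 \<le> M" "cmod u5 \<le> M"
    unfolding M_def by (rule cmod_le_sqrt, simp add: N2_def)+
  have Sb: "cmod S \<le> 6*M"
  proof -
    have "cmod S \<le> cmod u0+cmod u1+cmod u2+cmod u3+cmod u4+cmod u5"
      unfolding S_def by (rule tri6)
    then show ?thesis using ub by simp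
  qed
  have P2b: "cmod P2 \<le> N2"
  proof -
    have "cmod P2 \<le> cmod (u0^2)+cmod (u1^2)+cmod (u2^2)+cmod (u3^2)+cmod (u4^2)+cmod (u5^2)"
      unfolding P2_def by (rule tri6)
    then show ?thesis unfolding N2_def by (simp add: norm_power)
  qed
  have S4: "4*S = Q3 + 2 * of_real b * (S^2 - P2)" using eq by (simp add: algebra_simps)
  have "4 * cmod S = cmod (Q3 + 2 * of_real b * (S^2 - P2))"
    using arg_cong[OF S4, of cmod] by simp
  also have "\<dots> \<le> cmod Q3 + 2*b*(cmod S ^2 + cmod P2)"
  proof -
    have "cmod (2 * of_real b * (S^2 - P2)) = 2*b*cmod (S^2 - P2)"
      using b by (simp add: norm_mult)
    also have "\<dots> \<le> 2*b*(cmod S ^2 + cmod P2)"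
      using b by (intro mult_left_mono) (auto simp: norm_power intro: order_trans[OF norm_triangle_ineq4])
    finally show ?thesis using norm_triangle_ineq[of Q3 "2 * of_real b * (S^2 - P2)"] by linarith
  qed
  finally have s1: "4 * cmod S \<le> cmod Q3 + 2*b*(cmod S ^2 + cmod P2)" .
  have s2: "cmod S ^2 \<le> 6*M * cmod S"
    using mult_right_mono[OF Sb norm_ge_zero[of S]] by (simp add: power2_eq_square)
  have s3: "6*M*cmod S \<le> 6/1000 * cmod S" using mult_right_mono[OF Msmall norm_ge_zero[of S]] by simp
  have "cmod Q3 \<le> 64 * M^3" using q3 by (simp add: M_def)
  then have q3b: "cmod Q3 \<le> 64 * N2 / 1000" using M3 by linarith
  have "2*b*(cmod S ^2 + cmod P2) \<le> 2*(6/1000 * cmod S + N2)"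
    using b s2 s3 P2b by (intro mult_mono) auto
  then have "4 * cmod S \<le> (64/1000)*N2 + (12/1000)*cmod S + 2* N2" using s1 q3b by simp
  then have Sle: "cmod S \<le> N2" using N2ge norm_ge_zero[of S] by linarith
  have ReS: "Re S = Re u0+Re u1+Re u2+Re u3+Re u4+Re u5" unfolding S_def by simp
  have ReP: "Re P2 = (Re u0^2+Re u1^2+Re u2^2+Re u3^2+Re u4^2+Re u5^2) - (Im u0^2+Im u1^2+Im u2^2+Im u3^2+Im u4^2+Im u5^2)"
    unfolding P2_def by (simp add: re_sq)
  have ReE: "4 * Re S - 2*b*Re (S^2) + 2*b*Re P2 = Re Q3"
    using arg_cong[OF S4, of Re] by (simp add: algebra_simps)
  have reS2: "- (N2/1000000) \<le> Re (S^2)"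
  proof -
    have "cmod S ^2 \<le> N2^2" using Sle by (intro power_mono) auto
    also have "\<dots> = N2 * N2" by (simp add: power2_eq_square)
    also have "\<dots> \<le> (1/1000000) * N2" using small N2ge by (rule mult_right_mono)
    also have "\<dots> = N2/1000000" by simp
    finally have "cmod (S^2) \<le> N2/1000000" by (simp add: norm_power)
    then show ?thesis using abs_Re_le_cmod[of "S^2"] by linarith
  qed
  have reQ: "- cmod Q3 \<le> Re Q3" using abs_Re_le_cmod[of Q3] by linarith
  have "2*b*(- (N2/1000000)) \<le> 2*b*Re (S^2)" using reS2 b by (intro mult_left_mono) auto
  moreover have "2*(- (N2/1000000)) \<le> 2*b*(- (N2/1000000))" using b N2ge by (intro mult_right_mono_neg) auto
  ultimately have "- (2/1000000) * N2 \<le> 2*b*Re (S^2)" by linarith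
  then have key: "4 * Re S + 2*b*Re P2 \<ge> - (7/100) * N2" using ReE reQ q3b N2ge by simp
  have xs: "\<bar>Re u0\<bar> \<le> 1/1000" "\<bar>Re u1\<bar> \<le> 1/1000" "\<bar>Re u2\<bar> \<le> 1/1000"
     "\<bar>Re u3\<bar> \<le> 1/1000" "\<bar>Re u4\<bar> \<le> 1/1000" "\<bar>Re u5\<bar> \<le> 1/1000"
    using ub Msmall abs_Re_le_cmod by (meson order_trans)+
  have pt: "4*Re u0 + 2*b*Re u0^2 \<le> 8*max a 0 - \<bar>Re u0\<bar>"
       "4*Re u1 + 2*b*Re u1^2 \<le> 8*max a 0 - \<bar>Re u1\<bar>"
       "4*Re u2 + 2*b*Re u2^2 \<le> 8*max a 0 - \<bar>Re u2\<bar>"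
       "4*Re u3 + 2*b*Re u3^2 \<le> 8*max a 0 - \<bar>Re u3\<bar>"
       "4*Re u4 + 2*b*Re u4^2 \<le> 8*max a 0 - \<bar>Re u4\<bar>"
       "4*Re u5 + 2*b*Re u5^2 \<le> 8*max a 0 - \<bar>Re u5\<bar>"
    using per_term re xs b by auto
  have xsq: "Re u0^2 \<le> \<bar>Re u0\<bar>" "Re u1^2 \<le> \<bar>Re u1\<bar>" "Re u2^2 \<le> \<bar>Re u2\<bar>"
     "Re u3^2 \<le> \<bar>Re u3\<bar>" "Re u4^2 \<le> \<bar>Re u4\<bar>" "Re u5^2 \<le> \<bar>Re u5\<bar>"
    using xs by (auto intro!: sq_le_abs)
  have ysq: "Im u0^2 \<le> 2*b*Im u0^2" "Im u1^2 \<le> 2*b*Im u1^2" "Im u2^2 \<le> 2*b*Im u2^2"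
     "Im u3^2 \<le> 2*b*Im u3^2" "Im u4^2 \<le> 2*b*Im u4^2" "Im u5^2 \<le> 2*b*Im u5^2"
    using b by (auto intro!: sq_le_2b)
  have N2e: "N2 = (Re u0^2+Re u1^2+Re u2^2+Re u3^2+Re u4^2+Re u5^2) + (Im u0^2+Im u1^2+Im u2^2+Im u3^2+Im u4^2+Im u5^2)"
    unfolding N2_def by (simp add: cmod_sq)
  have bP: "2*b*Re P2 = (2*b*Re u0^2+2*b*Re u1^2+2*b*Re u2^2+2*b*Re u3^2+2*b*Re u4^2+2*b*Re u5^2) - (2*b*Im u0^2+2*b*Im u1^2+2*b*Im u2^2+2*b*Im u3^2+2*b*Im u4^2+2*b*Im u5^2)"
    unfolding ReP by (simp add: algebra_simps)
  have "N2 \<le> 52 * max a 0"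
    using key ReS bP pt xsq ysq N2e by linarith
  then show ?thesis using Sle by simp
qed



definition bet :: complex where "bet = - of_real (sqrt 15 / 5)"

lemma bet2: "bet^2 = 3/5"
proof -
  have c2: "(sqrt 15/5)^2 = (3/5::real)" by (simp add: power_divide)
  have "bet^2 = of_real ((sqrt 15/5)^2)" unfolding bet_def by (simp only: power2_minus of_real_power)
  also have "\<dots> = of_real (3/5)" by (simp only: c2)
  also have "\<dots> = 3/5" by simp
  finally show ?thesis .
qed

lemma sqrt15: "sqrt 15 \<le> (5::real)"
  by (rule power2_le_imp_le) auto

lemma cmod_bet: "cmod bet \<le> 1"
  using sqrt15 unfolding bet_def by (simp add: norm_divide)

lemma bet4: "bet^4 = 9/25"
proof -
  have "bet^4 = bet^2 * bet^2" by (simp add: power_add[symmetric])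
  then show ?thesis using bet2 by simp
qed

lemma bet6: "bet^6 = 27/125"
proof -
  have "bet^6 = bet^4 * bet^2" by (simp add: power_add[symmetric])
  then show ?thesis using bet2 bet4 by simp
qed

lemma bet5: "bet^5 = 9/25 * bet"
proof -
  have "bet^5 = bet^4 * bet^1" by (subst power_add[symmetric]) simp
  then show ?thesis using bet4 by simp
qed

lemma stars: "x0s = 7" "x1s = -6*bet" "y0s = bet^6" "y1s = -6*bet^5" "y2s = 15*bet^4 - 14"
proof -
  show "x0s = 7" by (simp add: x0s_def)
  show "x1s = -6*bet" by (simp add: x1s_def bet_def)
  show "y0s = bet^6" using bet6 by (simp add: y0s_def)
  have "-6*bet^5 = -6*(9/25*bet)" by (subst bet5) (rule refl)
  also have "\<dots> = y1s" by (simp add: bet_def y1s_def)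
  finally show "y1s = -6*bet^5" by simp
  show "y2s = 15*bet^4 - 14" unfolding y2s_def bet4 by simp
qed



lemma coeff_qpoly:
  "coeff (qpoly c0 c1 c2 c3 c4 c5 b) 0 = c0 + b*c1 + b^2*c2 + b^3*c3 + b^4*c4 + b^5*c5 + b^6"
  "coeff (qpoly c0 c1 c2 c3 c4 c5 b) 1 = c1 + 2*b*c2 + 3*b^2*c3 + 4*b^3*c4 + 5*b^4*c5 + 6*b^5"
  "coeff (qpoly c0 c1 c2 c3 c4 c5 b) 2 = c2 + 3*b*c3 + 6*b^2*c4 + 10*b^3*c5 + 15*b^4"
  "coeff (qpoly c0 c1 c2 c3 c4 c5 b) 3 = c3 + 4*b*c4 + 10*b^2*c5 + 20*b^3"
  "coeff (qpoly c0 c1 c2 c3 c4 c5 b) 4 = c4 + 5*b*c5 + 15*b^2"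
  "coeff (qpoly c0 c1 c2 c3 c4 c5 b) 5 = c5 + 6*b"
  unfolding qpoly_def by (simp_all add: numeral_eq_Suc)

lemma gen_constraint: fixes b x0 x1 :: complex assumes "b^2 = 3/5"
  shows "(2*x1 + 4*b*(x0+2) + 10*b^2*x1 + 20*b^3) - 4*b*(x0+2 + 5*b*x1 + 15*b^2) + 4*(x1 + 6*b) = 0"
  using assms by algebra

lemma gen_lin: fixes b x0 x1 y0 y1 y2 :: complex assumes "b^2 = 3/5"
  shows "x0+2 + 5*b*x1 + 15*b^2 = (x0-7) + 5*b*(x1 - -6*b)"
    "(2*x0+y2) + 3*b*(2*x1) + 6*b^2*(x0+2) + 10*b^3*x1 + 15*b^4 = (y2 - (15*b^4 - 14)) + 28/5*(x0-7) + 12*b*(x1 - -6*b)"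
    "y1 + 2*b*(2*x0+y2) + 3*b^2*(2*x1) + 4*b^3*(x0+2) + 5*b^4*x1 + 6*b^5
      = (y1 - -6*b^5) + 2*b*(y2 - (15*b^4 - 14)) + 32/5*b*(x0-7) + 27/5*(x1 - -6*b)"
    "y0 + b*y1 + b^2*(2*x0+y2) + b^3*(2*x1) + b^4*(x0+2) + b^5*x1 + b^6
      = (y0 - b^6) + b*(y1 - -6*b^5) + 3/5*(y2 - (15*b^4 - 14)) + 39/25*(x0-7) + 39/25*b*(x1 - -6*b)"
  using assms by algebra+

lemma gen_root: fixes b x0 x1 y0 y1 y2 r :: complex assumes "b^2 = 3/5"
  shows "(r^4 + 2*r^2) * (x0 + x1*r + r^2) + y0 + y1*r + y2*r^2 = (r-b)^6 + ((r^4+2*r^2)*((x0 - 7) + (x1 - (-6*b))*r)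
     + (y0 - b^6) + (y1 - (-6*b^5))*r + (y2 - (15*b^4 - 14))*r^2)"
  using assms by algebra

lemma poly_pxy: "poly (pxy x0 x1 y0 y1 y2) r = (r^4 + 2*r^2) * (x0 + x1*r + r^2) + y0 + y1*r + y2*r^2"
  unfolding pxy_def by (simp add: algebra_simps power2_eq_square power4_eq_xxxx)



lemma tri2: "cmod (a::complex) \<le> cmod (a+b) + cmod b"
  using norm_triangle_ineq4[of "a+b" b] by simp

lemma tri3: "cmod (a::complex) \<le> cmod (a+b+c) + cmod b + cmod c"
proof -
  have "cmod a \<le> cmod (a+b) + cmod b" by (rule tri2)
  moreover have "cmod (a+b) \<le> cmod (a+b+c) + cmod c" by (rule tri2)
  ultimately show ?thesis by linarith
qed

lemma tri4: "cmod (a::complex) \<le> cmod (a+b+c+d) + cmod b + cmod c + cmod d"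
proof -
  have "cmod a \<le> cmod (a+b+c) + cmod b + cmod c" by (rule tri3)
  moreover have "cmod (a+b+c) \<le> cmod (a+b+c+d) + cmod d" by (rule tri2)
  ultimately show ?thesis by linarith
qed

lemma tri5: "cmod (a::complex) \<le> cmod (a+b+c+d+e) + cmod b + cmod c + cmod d + cmod e"
proof -
  have "cmod a \<le> cmod (a+b+c+d) + cmod b + cmod c + cmod d" by (rule tri4)
  moreover have "cmod (a+b+c+d) \<le> cmod (a+b+c+d+e) + cmod e" by (rule tri2)
  ultimately show ?thesis by linarith
qed

lemma cb: "cmod (a*bet*z) \<le> cmod a * cmod z"
proof -
  have "cmod (a*bet*z) = cmod a * cmod bet * cmod z" by (simp add: norm_mult)
  also have "\<dots> \<le> cmod a * 1 * cmod z" using cmod_bet by (intro mult_right_mono mult_left_mono) auto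
  finally show ?thesis by simp
qed

lemma sq5: fixes a b c d e :: real assumes "0\<le>a" "0\<le>b" "0\<le>c" "0\<le>d" "0\<le>e"
  shows "a^2+b^2+c^2+d^2+e^2 \<le> (a+b+c+d+e)^2"
proof -
  let ?S = "a+b+c+d+e"
  have "a*a \<le> a*?S" "b*b \<le> b*?S" "c*c \<le> c*?S" "d*d \<le> d*?S" "e*e \<le> e*?S"
    using assms by (intro mult_left_mono; simp)+
  moreover have "?S^2 = a*?S + b*?S + c*?S + d*?S + e*?S" by (simp add: power2_eq_square distrib_right)
  ultimately show ?thesis by (simp add: power2_eq_square)
qed

lemma norm5_le: "norm5 a b c d e \<le> cmod a + cmod b + cmod c + cmod d + cmod e"
proof -
  have "norm5 a b c d e \<le> sqrt ((cmod a + cmod b + cmod c + cmod d + cmod e)^2)"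
    unfolding norm5_def by (subst real_sqrt_le_iff) (rule sq5, auto)
  also have "\<dots> = cmod a + cmod b + cmod c + cmod d + cmod e" by simp
  finally show ?thesis .
qed

lemma norm5_ge: fixes a b c d e :: complex shows "cmod a \<le> norm5 a b c d e" "cmod b \<le> norm5 a b c d e" "cmod c \<le> norm5 a b c d e"
   "cmod d \<le> norm5 a b c d e" "cmod e \<le> norm5 a b c d e"
  unfolding norm5_def by (rule real_le_rsqrt; simp)+

lemma norm5_nonneg: "0 \<le> norm5 a b c d e"
  unfolding norm5_def by simp

lemma dbound: fixes dx0 dx1 dy0 dy1 dy2 :: complex
  assumes h5: "cmod dx1 \<le> B" and h4: "cmod (dx0 + 5*bet*dx1) \<le> B"
    and h2: "cmod (dy2 + 28/5*dx0 + 12*bet*dx1) \<le> B"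
    and h1: "cmod (dy1 + 2*bet*dy2 + 32/5*bet*dx0 + 27/5*dx1) \<le> B"
    and h0: "cmod (dy0 + bet*dy1 + 3/5*dy2 + 39/25*dx0 + 39/25*bet*dx1) \<le> B"
  shows "norm5 dx0 dx1 dy0 dy1 dy2 \<le> 373*B"
proof -
  have a1: "cmod dx1 \<le> B" by (rule h5)
  have B0: "0 \<le> B" using h5 norm_ge_zero[of dx1] by linarith
  have "cmod dx0 \<le> cmod (dx0 + 5*bet*dx1) + cmod (5*bet*dx1)" by (rule tri2)
  moreover have "cmod (5*bet*dx1) \<le> 5 * cmod dx1" using cb[of 5 dx1] by simp
  ultimately have a0: "cmod dx0 \<le> 6*B" using h4 a1 B0 by linarith
  have "cmod dy2 \<le> cmod (dy2 + 28/5*dx0 + 12*bet*dx1) + cmod (28/5*dx0) + cmod (12*bet*dx1)" by (rule tri3)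
  moreover have "cmod (12*bet*dx1) \<le> 12 * cmod dx1" using cb[of 12 dx1] by simp
  moreover have "cmod (28/5*dx0) = 28/5 * cmod dx0" by (simp add: norm_mult norm_divide)
  ultimately have a2: "cmod dy2 \<le> 47*B" using h2 a1 a0 B0 by linarith
  have "cmod dy1 \<le> cmod (dy1 + 2*bet*dy2 + 32/5*bet*dx0 + 27/5*dx1) + cmod (2*bet*dy2) + cmod (32/5*bet*dx0) + cmod (27/5*dx1)" by (rule tri4)
  moreover have "cmod (2*bet*dy2) \<le> 2 * cmod dy2" using cb[of 2 dy2] by simp
  moreover have "cmod (32/5*bet*dx0) \<le> 32/5 * cmod dx0" using cb[of "32/5" dx0] by (simp add: norm_divide)
  moreover have "cmod (27/5*dx1) = 27/5 * cmod dx1" by (simp add: norm_mult norm_divide)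
  ultimately have a3: "cmod dy1 \<le> 139*B" using h1 a1 a0 a2 B0 by linarith
  have "cmod dy0 \<le> cmod (dy0 + bet*dy1 + 3/5*dy2 + 39/25*dx0 + 39/25*bet*dx1) + cmod (bet*dy1) + cmod (3/5*dy2) + cmod (39/25*dx0) + cmod (39/25*bet*dx1)" by (rule tri5)
  moreover have "cmod (bet*dy1) \<le> cmod dy1" using cb[of 1 dy1] by simp
  moreover have "cmod (3/5*dy2) = 3/5 * cmod dy2" by (simp add: norm_mult norm_divide)
  moreover have "cmod (39/25*dx0) = 39/25 * cmod dx0" by (simp add: norm_mult norm_divide)
  moreover have "cmod (39/25*bet*dx1) \<le> 39/25 * cmod dx1" using cb[of "39/25" dx1] by (simp add: norm_divide)
  ultimately have a4: "cmod dy0 \<le> 180*B" using h0 a1 a0 a2 a3 B0 by linarith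
  show ?thesis using norm5_le[of dx0 dx1 dy0 dy1 dy2] a0 a1 a2 a3 a4 by linarith
qed



lemma Rbound: fixes R e :: real assumes "1 \<le> R" "0 \<le> e"
  shows "(R^4+2*R^2)*(e+e*R) + e + e*R + e*R^2 \<le> 9*e*R^5"
proof -
  have p: "R^4 \<le> R^5" "R^3 \<le> R^5" "R^2 \<le> R^5" "R^1 \<le> R^5" "R^0 \<le> R^5"
    using assms(1) by (intro power_increasing; simp)+
  have "(R^4+2*R^2)*(e+e*R) + e + e*R + e*R^2 = e*(R^5 + R^4 + 2*R^3 + 3*R^2 + R^1 + R^0)"
    by (simp add: algebra_simps power2_eq_square power3_eq_cube power4_eq_xxxx eval_nat_numeral)
  also have "\<dots> \<le> e*(9*R^5)" using p assms(2) by (intro mult_left_mono) auto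
  finally show ?thesis by simp
qed

lemma rootloc:
  assumes r: "poly (pxy x0 x1 y0 y1 y2) r = 0"
    and en: "norm5 (x0 - x0s) (x1 - x1s) (y0 - y0s) (y1 - y1s) (y2 - y2s) \<le> e" and e1: "288*e < 1"
  shows "cmod (r - bet)^6 \<le> 288*e"
proof -
  define D0 D1 E0 E1 E2 where "D0 = x0 - x0s" and "D1 = x1 - x1s" and "E0 = y0 - y0s" and "E1 = y1 - y1s" and "E2 = y2 - y2s"
  have "poly (pxy x0 x1 y0 y1 y2) r = (r-bet)^6 + ((r^4+2*r^2)*(D0 + D1*r) + E0 + E1*r + E2*r^2)"
    unfolding D0_def D1_def E0_def E1_def E2_def stars poly_pxy by (rule gen_root[OF bet2])
  then have "(r-bet)^6 + ((r^4+2*r^2)*(D0 + D1*r) + E0 + E1*r + E2*r^2) = 0" using r by simp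
  then have "(r-bet)^6 = - ((r^4+2*r^2)*(D0 + D1*r) + E0 + E1*r + E2*r^2)"
    by (simp only: eq_neg_iff_add_eq_0)
  then have t6: "cmod (r-bet)^6 = cmod ((r^4+2*r^2)*(D0 + D1*r) + E0 + E1*r + E2*r^2)"
    by (metis norm_minus_cancel norm_power)
  have en': "norm5 D0 D1 E0 E1 E2 \<le> e" using en unfolding D0_def D1_def E0_def E1_def E2_def .
  note ng = norm5_ge[where a=D0 and b=D1 and c=E0 and d=E1 and e=E2]
  have eb: "cmod D0 \<le> e" "cmod D1 \<le> e" "cmod E0 \<le> e" "cmod E1 \<le> e" "cmod E2 \<le> e"
    using ng(1) en' apply linarith using ng(2) en' apply linarith using ng(3) en' apply linarith
    using ng(4) en' apply linarith using ng(5) en' apply linarith done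
  have e0: "0 \<le> e" using eb(1) norm_ge_zero[of D0] by linarith
  define t where "t = cmod (r - bet)"
  define \<rho> where "\<rho> = cmod r"
  define R where "R = t + 1"
  have t0: "0 \<le> t" and \<rho>0: "0 \<le> \<rho>" unfolding t_def \<rho>_def by auto
  have \<rho>R: "\<rho> \<le> R"
  proof -
    have "cmod r \<le> cmod (r - bet) + cmod bet" using norm_triangle_ineq[of "r - bet" bet] by simp
    then show ?thesis using cmod_bet unfolding \<rho>_def R_def t_def by linarith
  qed
  have R1: "1 \<le> R" unfolding R_def using t0 by simp
  have c1: "cmod (r^4+2*r^2) \<le> \<rho>^4 + 2*\<rho>^2"
    using norm_triangle_ineq[of "r^4" "2*r^2"] unfolding \<rho>_def by (simp add: norm_power norm_mult)
  have c2: "cmod (D0 + D1*r) \<le> e + e*\<rho>"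
  proof -
    have "cmod (D0 + D1*r) \<le> cmod D0 + cmod D1 * \<rho>" using norm_triangle_ineq[of D0 "D1*r"] unfolding \<rho>_def by (simp add: norm_mult)
    moreover have "cmod D1 * \<rho> \<le> e * \<rho>" using eb(2) \<rho>0 by (rule mult_right_mono)
    ultimately show ?thesis using eb(1) by linarith
  qed
  have c3: "cmod (E0 + E1*r + E2*r^2) \<le> e + e*\<rho> + e*\<rho>^2"
  proof -
    have "cmod (E0 + E1*r + E2*r^2) \<le> cmod E0 + cmod (E1*r) + cmod (E2*r^2)"
      using norm_triangle_ineq[of "E0 + E1*r" "E2*r^2"] norm_triangle_ineq[of E0 "E1*r"] by linarith
    moreover have "cmod (E1*r) \<le> e*\<rho>" unfolding \<rho>_def norm_mult using eb(4) by (rule mult_right_mono) simp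
    moreover have "cmod (E2*r^2) \<le> e*\<rho>^2" unfolding \<rho>_def norm_mult norm_power using eb(5) by (rule mult_right_mono) simp
    ultimately show ?thesis using eb(3) by linarith
  qed
  have "t^6 \<le> cmod ((r^4+2*r^2)*(D0 + D1*r)) + cmod (E0 + E1*r + E2*r^2)"
    using t6 norm_triangle_ineq[of "(r^4+2*r^2)*(D0 + D1*r)" "E0 + E1*r + E2*r^2"] unfolding t_def
    by (simp add: add.assoc)
  also have "cmod ((r^4+2*r^2)*(D0 + D1*r)) \<le> (\<rho>^4 + 2*\<rho>^2) * (e + e*\<rho>)"
    unfolding norm_mult using c1 c2 by (intro mult_mono) auto
  finally have t6b: "t^6 \<le> (\<rho>^4 + 2*\<rho>^2) * (e + e*\<rho>) + (e + e*\<rho> + e*\<rho>^2)" using c3 by linarith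
  have m1: "(\<rho>^4 + 2*\<rho>^2) * (e + e*\<rho>) \<le> (R^4 + 2*R^2) * (e + e*R)"
  proof (rule mult_mono)
    show "\<rho>^4 + 2*\<rho>^2 \<le> R^4 + 2*R^2" using \<rho>R \<rho>0 power_mono[of \<rho> R 4] power_mono[of \<rho> R 2] by linarith
    show "e + e*\<rho> \<le> e + e*R" using \<rho>R e0 mult_left_mono by simp
  qed (use e0 \<rho>0 R1 in auto)
  have m2: "e*\<rho> \<le> e*R" "e*\<rho>^2 \<le> e*R^2"
    using \<rho>R e0 \<rho>0 power_mono[of \<rho> R 2] by (auto intro: mult_left_mono)
  have tR: "t^6 \<le> 9*e*R^5" using t6b m1 m2 Rbound[OF R1 e0] by linarith
  show ?thesis
  proof (cases "1 \<le> t")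
    case True
    have "R^5 \<le> (2*t)^5" using True t0 unfolding R_def by (intro power_mono) auto
    then have "9*e*R^5 \<le> 9*e*(2*t)^5" using e0 by (intro mult_left_mono) auto
    moreover have "9*e*(2*t)^5 = (288*e)*t^5" by (simp add: power_mult_distrib)
    moreover have "t^6 = t*t^5" using power_Suc[of t 5] by simp
    ultimately have "t * t^5 \<le> (288*e) * t^5" using tR by linarith
    moreover have "0 < t^5" using True by simp
    ultimately have "t \<le> 288*e" by simp
    then show ?thesis using True e1 by linarith
  next
    case False
    have "R^5 \<le> 2^5" using False t0 unfolding R_def by (intro power_mono) auto
    then have "9*e*R^5 \<le> 9*e*2^5" using e0 by (intro mult_left_mono) auto
    then show ?thesis using tR unfolding t_def by simp
  qed
qed



lemma prod6: "(\<Prod>i<6. (f::nat \<Rightarrow> _) i) = f 0 * f 1 * f 2 * f 3 * (f 4 :: 'a :: comm_monoid_mult) * f 5"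
  by (simp add: eval_nat_numeral)

lemma test_roots:
  fixes x0 x1 y0 y1 y2 :: complex
  obtains r0 r1 r2 r3 r4 r5 where "\<And>z. poly (pxy x0 x1 y0 y1 y2) z = (z-r0)*(z-r1)*(z-r2)*(z-r3)*(z-r4)*(z-r5)"
proof -
  let ?p = "pxy x0 x1 y0 y1 y2"
  have deg: "degree ?p = 6" and lc: "lead_coeff ?p = 1" unfolding pxy_eq by simp_all
  obtain root where "smult (lead_coeff ?p) (\<Prod>i<degree ?p. [:-root i, 1:]) = ?p"
    by (rule complex_poly_decompose')
  then have eq: "?p = (\<Prod>i<6. [:-root i, 1:])" using deg lc by simp
  have "\<And>z. poly ?p z = (z - root 0)*(z-root 1)*(z-root 2)*(z-root 3)*(z-root 4)*(z-root 5)"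
  proof -
    fix z
    have "poly ?p z = poly (\<Prod>i<6. [:-root i, 1:]) z" by (rule arg_cong[where f="\<lambda>q. poly q z", OF eq])
    also have "\<dots> = (\<Prod>i<6. z - root i)" by (simp add: poly_prod)
    also have "\<dots> = (z - root 0)*(z-root 1)*(z-root 2)*(z-root 3)*(z-root 4)*(z-root 5)" by (rule prod6)
    finally show "poly ?p z = (z - root 0)*(z-root 1)*(z-root 2)*(z-root 3)*(z-root 4)*(z-root 5)" .
  qed
  then show ?thesis using that by blast
qed



lemma poly_lp: "poly (lp us) t = prod_list (map (\<lambda>u. t - u) us)"
  by (induction us) (simp_all add: lp_def algebra_simps)

lemma astar: "abscissa (pxy x0s x1s y0s y1s y2s) = Re bet"
proof -
  have pz: "poly (pxy x0s x1s y0s y1s y2s) z = (z - bet)^6" for z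
  proof -
    have "poly (pxy x0s x1s y0s y1s y2s) z = (z-bet)^6 + ((z^4+2*z^2)*((x0s - 7) + (x1s - -6*bet)*z)
     + (y0s - bet^6) + (y1s - -6*bet^5)*z + (y2s - (15*bet^4 - 14))*z^2)"
      unfolding poly_pxy by (rule gen_root[OF bet2])
    then show ?thesis by (simp add: stars)
  qed
  have "{z. poly (pxy x0s x1s y0s y1s y2s) z = 0} = {bet}" unfolding pz by auto
  then show ?thesis unfolding abscissa_def by simp
qed

lemma b_bounds: "1/2 \<le> sqrt 15 / 5" "sqrt 15 / 5 \<le> (1::real)"
proof -
  have "5/2 \<le> sqrt 15" by (rule real_le_rsqrt) (simp add: power_divide)
  then show "1/2 \<le> sqrt 15 / 5" by simp
  show "sqrt 15 / 5 \<le> (1::real)" using sqrt15 by simp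
qed

lemma core:
  fixes x0 x1 y0 y1 y2 :: complex
  assumes small: "norm5 (x0 - x0s) (x1 - x1s) (y0 - y0s) (y1 - y1s) (y2 - y2s) < 1/(288*2500^6)"
  shows "abscissa (pxy x0s x1s y0s y1s y2s) + 1/1241344 * norm5 (x0 - x0s) (x1 - x1s) (y0 - y0s) (y1 - y1s) (y2 - y2s)
          \<le> abscissa (pxy x0 x1 y0 y1 y2)"
proof -
  define e where "e = norm5 (x0 - x0s) (x1 - x1s) (y0 - y0s) (y1 - y1s) (y2 - y2s)"
  let ?p = "pxy x0 x1 y0 y1 y2"
  obtain r0 r1 r2 r3 r4 r5 where pe: "\<And>z. poly ?p z = (z-r0)*(z-r1)*(z-r2)*(z-r3)*(z-r4)*(z-r5)"
    by (rule test_roots[of x0 x1 y0 y1 y2]) blast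
  have rootset: "{z. poly ?p z = 0} = {r0,r1,r2,r3,r4,r5}" using pe by auto
  have isr: "poly ?p r0 = 0" "poly ?p r1 = 0" "poly ?p r2 = 0" "poly ?p r3 = 0" "poly ?p r4 = 0" "poly ?p r5 = 0"
    using pe by simp_all
  have e0: "0 \<le> e" unfolding e_def by (rule norm5_nonneg)
  have eless: "288*e < (1/2500)^6" using small unfolding e_def by (simp add: power_divide field_simps)
  have e288: "288*e < 1" using eless by (simp add: power_divide)
  have en: "norm5 (x0 - x0s) (x1 - x1s) (y0 - y0s) (y1 - y1s) (y2 - y2s) \<le> e" unfolding e_def by simp
  have loc: "cmod (r - bet) < 1/2500" if "poly ?p r = 0" for r
  proof -
    have "cmod (r - bet)^6 \<le> 288*e" by (rule rootloc[OF that en e288])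
    then have "cmod (r - bet)^6 < (1/2500)^6" using eless by linarith
    then show ?thesis by (rule power_less_imp_less_base) simp
  qed
  define u0 u1 u2 u3 u4 u5 where "u0 = r0 - bet" and "u1 = r1 - bet" and "u2 = r2 - bet"
    and "u3 = r3 - bet" and "u4 = r4 - bet" and "u5 = r5 - bet"
  define N2 where "N2 = cmod u0^2+cmod u1^2+cmod u2^2+cmod u3^2+cmod u4^2+cmod u5^2"
  define us where "us = [u0,u1,u2,u3,u4,u5]"
  have usq: "cmod u^2 \<le> 1/6250000" if "u \<in> set us" for u
  proof -
    have "cmod u < 1/2500" using that loc isr unfolding us_def u0_def u1_def u2_def u3_def u4_def u5_def by auto
    then have "cmod u^2 \<le> (1/2500)^2" by (intro power_mono) auto
    then show ?thesis by (simp add: power_divide)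
  qed
  have N2small: "N2 \<le> 1/1000000"
    using usq[of u0] usq[of u1] usq[of u2] usq[of u3] usq[of u4] usq[of u5] unfolding N2_def us_def by simp
  have N2ge: "0 \<le> N2" unfolding N2_def by (intro add_nonneg_nonneg) auto
  define M where "M = sqrt N2"
  have M0: "0 \<le> M" and M1: "M \<le> 1" and MM: "M^2 = N2" unfolding M_def using N2ge N2small by auto
  have ubM: "\<forall>u\<in>set us. cmod u \<le> M"
    unfolding M_def us_def by (auto intro!: cmod_le_sqrt simp: N2_def)
  define q where "q = qpoly y0 y1 (2*x0+y2) (2*x1) (x0+2) x1 bet"
  have qlp: "q = lp us"
  proof (rule poly_eq_poly_eq_iff[THEN iffD1], rule ext)
    fix t
    have "poly q t = poly ?p (t + bet)" unfolding q_def qpoly_eval pxy_eq ..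
    also have "\<dots> = (t-u0)*(t-u1)*(t-u2)*(t-u3)*(t-u4)*(t-u5)"
      unfolding pe u0_def u1_def u2_def u3_def u4_def u5_def by (simp add: algebra_simps)
    also have "\<dots> = poly (lp us) t" unfolding poly_lp us_def by (simp add: mult_ac)
    finally show "poly q t = poly (lp us) t" .
  qed
  define S where "S = u0+u1+u2+u3+u4+u5"
  define P2 where "P2 = u0^2+u1^2+u2^2+u3^2+u4^2+u5^2"
  have c5: "coeff q 5 = - S" unfolding qlp using lp_sub1[of us 5] unfolding us_def S_def by (simp add: add.assoc)
  have c4: "coeff q 4 = (S^2 - P2)/2" unfolding qlp using lp_sub2[of us 4] unfolding us_def S_def P2_def by (simp add: add.assoc)
  have cb: "cmod (coeff q k) \<le> 2^6 * M^(6-k)" for k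
  proof -
    have lus: "length us = 6" unfolding us_def by simp
    show ?thesis using lp_bound[OF ubM M0 M1, of k] unfolding qlp lus .
  qed
  have cons: "coeff q 3 - 4*bet*coeff q 4 + 4*coeff q 5 = 0"
    unfolding q_def coeff_qpoly by (rule gen_constraint[OF bet2])
  define b where "b = sqrt 15 / 5"
  have eqm: "coeff q 3 + 2 * of_real b * (S^2 - P2) - 4 * S = 0"
  proof -
    have "coeff q 3 + 2 * of_real b * (S^2 - P2) - 4 * S = coeff q 3 - 4*bet*coeff q 4 + 4*coeff q 5"
    proof -
      have hb: "bet = - of_real b" unfolding bet_def b_def ..
      show ?thesis unfolding c4 c5 hb by (simp add: field_simps)
    qed
    then show ?thesis using cons by simp
  qed
  define a where "a = abscissa ?p - Re bet"
  have fin: "finite (Re ` {r0,r1,r2,r3,r4,r5})" by simp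
  have abs_eq: "abscissa ?p = Max (Re ` {r0,r1,r2,r3,r4,r5})" unfolding abscissa_def rootset ..
  have reb: "Re u \<le> a" if "u \<in> set us" for u
  proof -
    have "\<exists>r\<in>{r0,r1,r2,r3,r4,r5}. u = r - bet" using that unfolding us_def u0_def u1_def u2_def u3_def u4_def u5_def by auto
    then obtain r where r: "r \<in> {r0,r1,r2,r3,r4,r5}" "u = r - bet" by blast
    have "Re r \<le> abscissa ?p" unfolding abs_eq using fin r(1) by (intro Max_ge) auto
    then show ?thesis unfolding a_def r(2) by simp
  qed
  have q3: "cmod (coeff q 3) \<le> 64 * sqrt N2 ^ 3" using cb[of 3] unfolding M_def by simp
  have mi: "N2 \<le> 52 * max a 0 \<and> cmod S \<le> N2"
    unfolding N2_def S_def
    by (rule mainineq[OF q3[unfolded N2_def] eqm[unfolded S_def P2_def] b_bounds[folded b_def] N2small[unfolded N2_def]])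
       (use reb in \<open>auto simp: us_def\<close>)
  have B4: "cmod (coeff q k) \<le> 64 * N2" if "k \<le> 4" for k
  proof -
    have "M^(6-k) \<le> M^2" using M0 M1 that by (intro power_decreasing) auto
    then show ?thesis using cb[of k] MM by simp
  qed
  have B5: "cmod (coeff q 5) \<le> 64 * N2" using mi c5 N2ge by simp
  have h5: "cmod (x1 - x1s) \<le> 64*N2"
  proof -
    have "x1 - x1s = coeff q 5" by (simp add: q_def coeff_qpoly stars)
    then show ?thesis using B5 by simp
  qed
  have h4: "cmod ((x0 - x0s) + 5*bet*(x1 - x1s)) \<le> 64*N2"
  proof -
    have "(x0 - x0s) + 5*bet*(x1 - x1s) = coeff q 4"
      unfolding q_def coeff_qpoly stars by (rule gen_lin(1)[OF bet2, symmetric])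
    then show ?thesis using B4[of 4] by simp
  qed
  have h2: "cmod ((y2 - y2s) + 28/5*(x0 - x0s) + 12*bet*(x1 - x1s)) \<le> 64*N2"
  proof -
    have "(y2 - y2s) + 28/5*(x0 - x0s) + 12*bet*(x1 - x1s) = coeff q 2"
      unfolding q_def coeff_qpoly stars by (rule gen_lin(2)[OF bet2, symmetric])
    then show ?thesis using B4[of 2] by simp
  qed
  have h1: "cmod ((y1 - y1s) + 2*bet*(y2 - y2s) + 32/5*bet*(x0 - x0s) + 27/5*(x1 - x1s)) \<le> 64*N2"
  proof -
    have "(y1 - y1s) + 2*bet*(y2 - y2s) + 32/5*bet*(x0 - x0s) + 27/5*(x1 - x1s) = coeff q 1"
      unfolding q_def coeff_qpoly stars by (rule gen_lin(3)[OF bet2, symmetric])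
    then show ?thesis using B4[of 1] by simp
  qed
  have h0: "cmod ((y0 - y0s) + bet*(y1 - y1s) + 3/5*(y2 - y2s) + 39/25*(x0 - x0s) + 39/25*bet*(x1 - x1s)) \<le> 64*N2"
  proof -
    have "(y0 - y0s) + bet*(y1 - y1s) + 3/5*(y2 - y2s) + 39/25*(x0 - x0s) + 39/25*bet*(x1 - x1s) = coeff q 0"
      unfolding q_def coeff_qpoly stars by (rule gen_lin(4)[OF bet2, symmetric])
    then show ?thesis using B4[of 0] by simp
  qed
  have eB: "e \<le> 373 * (64 * N2)" unfolding e_def by (rule dbound[OF h5 h4 h2 h1 h0])
  have a0: "0 \<le> a"
  proof (rule ccontr)
    assume "\<not> 0 \<le> a"
    then have "N2 \<le> 0" using mi by simp
    then have "N2 = 0" using N2ge by simp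
    then have "u0 = 0 \<and> u1 = 0 \<and> u2 = 0 \<and> u3 = 0 \<and> u4 = 0 \<and> u5 = 0"
      unfolding N2_def by (simp add: add_nonneg_eq_0_iff)
    then have "{r0,r1,r2,r3,r4,r5} = {bet}" unfolding u0_def u1_def u2_def u3_def u4_def u5_def by auto
    then have "abscissa ?p = Re bet" unfolding abs_eq by simp
    then have "a = 0" unfolding a_def by simp
    then show False using \<open>\<not> 0 \<le> a\<close> by simp
  qed
  have "e \<le> 1241344 * a" using eB mi a0 by simp
  then show ?thesis unfolding astar e_def[symmetric] a_def by simp
qed


theorem mainTheorem1:
  shows "(\<exists>\<delta>>0. \<forall>x0 x1 y0 y1 y2.
            norm5 (x0 - x0s) (x1 - x1s) (y0 - y0s) (y1 - y1s) (y2 - y2s) < \<delta> \<longrightarrow>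
            abscissa (pxy x0 x1 y0 y1 y2) \<ge> abscissa (pxy x0s x1s y0s y1s y2s))
       \<and> (\<exists>\<tau>>0. \<exists>\<delta>>0. \<forall>x0 x1 y0 y1 y2.
            norm5 (x0 - x0s) (x1 - x1s) (y0 - y0s) (y1 - y1s) (y2 - y2s) < \<delta> \<longrightarrow>
            abscissa (pxy x0 x1 y0 y1 y2) \<ge> abscissa (pxy x0s x1s y0s y1s y2s)
              + \<tau> * norm5 (x0 - x0s) (x1 - x1s) (y0 - y0s) (y1 - y1s) (y2 - y2s))"
proof -
  define \<delta> :: real where "\<delta> = 1/(288*2500^6)"
  have dpos: "\<delta> > 0" unfolding \<delta>_def by simp
  have B: "\<forall>x0 x1 y0 y1 y2.
            norm5 (x0 - x0s) (x1 - x1s) (y0 - y0s) (y1 - y1s) (y2 - y2s) < \<delta> \<longrightarrow>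
            abscissa (pxy x0 x1 y0 y1 y2) \<ge> abscissa (pxy x0s x1s y0s y1s y2s)
              + 1/1241344 * norm5 (x0 - x0s) (x1 - x1s) (y0 - y0s) (y1 - y1s) (y2 - y2s)"
    unfolding \<delta>_def using core by blast
  have A: "\<forall>x0 x1 y0 y1 y2.
            norm5 (x0 - x0s) (x1 - x1s) (y0 - y0s) (y1 - y1s) (y2 - y2s) < \<delta> \<longrightarrow>
            abscissa (pxy x0 x1 y0 y1 y2) \<ge> abscissa (pxy x0s x1s y0s y1s y2s)"
  proof (intro allI impI)
    fix x0 x1 y0 y1 y2 :: complex
    assume h: "norm5 (x0 - x0s) (x1 - x1s) (y0 - y0s) (y1 - y1s) (y2 - y2s) < \<delta>"
    have "abscissa (pxy x0s x1s y0s y1s y2s)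
              + 1/1241344 * norm5 (x0 - x0s) (x1 - x1s) (y0 - y0s) (y1 - y1s) (y2 - y2s) \<le> abscissa (pxy x0 x1 y0 y1 y2)"
      using B h by blast
    moreover have "0 \<le> 1/1241344 * norm5 (x0 - x0s) (x1 - x1s) (y0 - y0s) (y1 - y1s) (y2 - y2s)"
      using norm5_nonneg by simp
    ultimately show "abscissa (pxy x0 x1 y0 y1 y2) \<ge> abscissa (pxy x0s x1s y0s y1s y2s)" by linarith
  qed
  have tpos: "(1/1241344::real) > 0" by simp
  show ?thesis using A B dpos tpos by blast
qed

end
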